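(* Let $I$ be an LBFLO instance with optimal solution $O$ of cost $Cost_I(O)$, and let $\delta\ge 0$. For each facility $i\in\mathcal{F}$ let $N_i$ be a set of $L_i$ clients nearest to $i$ (with respect to $c$). Let $I'$ be the FLO instance with the same facilities, clients, metric and outlier bound $t$ as $I$, with the lower bounds removed, and with opening costs $f'_i = f_i + \delta\sum_{j\in N_i} c(i,j)$. Then the optimal cost of $I'$ is at most $(1+\delta)\,Cost_I(O)$.
   Context: FLO: facilities $\mathcal{F}$, clients $\mathcal{C}$ with $|\mathcal{C}|=m$, opening costs $f_i\ge0$, metric $c$ on $\mathcal{F}\cup\mathcal{C}$, integer $t\ge0$; a feasible solution opens $F'\subseteq\mathcal{F}$ and assigns at least $m-t$ clients to facilities in $F'$, with cost $\sum_{i\in F'} f_i+\sum_{j\text{ assigned}} c(j,\sigma(j))$. LBFLO: additionally each $i\in\mathcal{F}$ has a nonnegative integer lower bound $L_i$, and every opened facility must be assigned at least $L_i$ clients. *)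

theory Defs
  imports Main "HOL-Library.Library"
begin

text \<open>Facilities and clients are points of a common type 'a; c is a (pseudo)metric on F \<union> C.\<close>

definition is_metric_on :: "'a set \<Rightarrow> ('a \<Rightarrow> 'a \<Rightarrow> real) \<Rightarrow> bool" where
  "is_metric_on X c \<longleftrightarrow>
     (\<forall>x\<in>X. c x x = 0) \<and>
     (\<forall>x\<in>X. \<forall>y\<in>X. c x y \<ge> 0 \<and> c x y = c y x) \<and>
     (\<forall>x\<in>X. \<forall>y\<in>X. \<forall>z\<in>X. c x z \<le> c x y + c y z)"

text \<open>A solution is a triple (F', A, \<sigma>): opened facilities F', assigned clients A,
  assignment \<sigma> (only its values on A matter).\<close>

definition flo_feasible ::
  "'a set \<Rightarrow> 'a set \<Rightarrow> nat \<Rightarrow> 'a set \<Rightarrow> 'a set \<Rightarrow> ('a \<Rightarrow> 'a) \<Rightarrow> bool" where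
  "flo_feasible F C t F' A \<sigma> \<longleftrightarrow>
     F' \<subseteq> F \<and> A \<subseteq> C \<and> card A \<ge> card C - t \<and> (\<forall>j\<in>A. \<sigma> j \<in> F')"

definition lbflo_feasible ::
  "'a set \<Rightarrow> 'a set \<Rightarrow> nat \<Rightarrow> ('a \<Rightarrow> nat) \<Rightarrow> 'a set \<Rightarrow> 'a set \<Rightarrow> ('a \<Rightarrow> 'a) \<Rightarrow> bool" where
  "lbflo_feasible F C t L F' A \<sigma> \<longleftrightarrow>
     flo_feasible F C t F' A \<sigma> \<and> (\<forall>i\<in>F'. card {j\<in>A. \<sigma> j = i} \<ge> L i)"

definition sol_cost ::
  "('a \<Rightarrow> real) \<Rightarrow> ('a \<Rightarrow> 'a \<Rightarrow> real) \<Rightarrow> 'a set \<Rightarrow> 'a set \<Rightarrow> ('a \<Rightarrow> 'a) \<Rightarrow> real" where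
  "sol_cost f c F' A \<sigma> = (\<Sum>i\<in>F'. f i) + (\<Sum>j\<in>A. c j (\<sigma> j))"

definition flo_opt ::
  "'a set \<Rightarrow> 'a set \<Rightarrow> ('a \<Rightarrow> real) \<Rightarrow> ('a \<Rightarrow> 'a \<Rightarrow> real) \<Rightarrow> nat \<Rightarrow> real" where
  "flo_opt F C f c t = Inf {sol_cost f c F' A \<sigma> | F' A \<sigma>. flo_feasible F C t F' A \<sigma>}"

definition lbflo_optimal ::
  "'a set \<Rightarrow> 'a set \<Rightarrow> ('a \<Rightarrow> real) \<Rightarrow> ('a \<Rightarrow> 'a \<Rightarrow> real) \<Rightarrow> nat \<Rightarrow> ('a \<Rightarrow> nat)
   \<Rightarrow> 'a set \<Rightarrow> 'a set \<Rightarrow> ('a \<Rightarrow> 'a) \<Rightarrow> bool" where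
  "lbflo_optimal F C f c t L F' A \<sigma> \<longleftrightarrow>
     lbflo_feasible F C t L F' A \<sigma> \<and>
     (\<forall>F'' A' \<sigma>'. lbflo_feasible F C t L F'' A' \<sigma>' \<longrightarrow>
        sol_cost f c F' A \<sigma> \<le> sol_cost f c F'' A' \<sigma>')"

definition nearest_clients :: "('a \<Rightarrow> 'a \<Rightarrow> real) \<Rightarrow> 'a set \<Rightarrow> 'a \<Rightarrow> nat \<Rightarrow> 'a set \<Rightarrow> bool" where
  "nearest_clients c C i l N \<longleftrightarrow>
     N \<subseteq> C \<and> card N = l \<and> (\<forall>j\<in>N. \<forall>j'\<in>C - N. c i j \<le> c i j')"

end

theory Submission
  imports Defs
begin

lemma sum_le_card_aux:
  fixes g :: "'a \<Rightarrow> real"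
  assumes "finite X" "finite Y" "card X \<le> card Y"
    and "\<forall>x\<in>X. \<forall>y\<in>Y. g x \<le> g y" and "\<forall>y\<in>Y. g y \<ge> 0"
  shows "sum g X \<le> sum g Y"
proof (cases "X = {}")
  case True thus ?thesis using assms by (simp add: sum_nonneg)
next
  case False
  hence Yne: "Y \<noteq> {}" using assms card_gt_0_iff by fastforce
  define m where "m = Min (g ` Y)"
  have mY: "\<forall>y\<in>Y. m \<le> g y" using assms(2) by (simp add: m_def)
  have "m \<in> g ` Y" using assms(2) Yne by (simp add: m_def)
  then obtain y0 where y0: "y0 \<in> Y" "m = g y0" by auto
  have m0: "m \<ge> 0" using y0 assms(5) by auto
  have "sum g X \<le> sum (\<lambda>_. m) X" using assms(4) y0 by (intro sum_mono) auto
  also have "\<dots> = real (card X) * m" by simp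
  also have "\<dots> \<le> real (card Y) * m" using assms(3) m0 by (simp add: mult_right_mono)
  also have "\<dots> = sum (\<lambda>_. m) Y" by simp
  also have "\<dots> \<le> sum g Y" using mY by (intro sum_mono) auto
  finally show ?thesis .
qed

lemma nearest_le:
  fixes g :: "'a \<Rightarrow> real"
  assumes "finite C" "N \<subseteq> C" "A \<subseteq> C" "card N \<le> card A"
    and "\<forall>j\<in>N. \<forall>j'\<in>C - N. g j \<le> g j'" and "\<forall>j\<in>C. g j \<ge> 0"
  shows "sum g N \<le> sum g A"
proof -
  have fN: "finite N" and fA: "finite A" using assms finite_subset by metis+
  have cN: "card N = card (N \<inter> A) + card (N - A)"
    using fN by (metis Int_Diff_disjoint Int_Diff_Un card_Un_disjoint finite_Diff finite_Int)
  have cA: "card A = card (A \<inter> N) + card (A - N)"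
    using fA by (metis Int_Diff_disjoint Int_Diff_Un card_Un_disjoint finite_Diff finite_Int)
  have "card (N - A) \<le> card (A - N)" using cN cA assms(4) by (simp add: Int_commute)
  hence le: "sum g (N - A) \<le> sum g (A - N)"
    using assms fN fA by (intro sum_le_card_aux) auto
  have "sum g N = sum g (N \<inter> A) + sum g (N - A)"
    using fN by (metis sum.Int_Diff)
  also have "\<dots> \<le> sum g (A \<inter> N) + sum g (A - N)" using le by (simp add: Int_commute)
  also have "\<dots> = sum g A" using fA by (metis sum.Int_Diff)
  finally show ?thesis .
qed

theorem lemma1:
  fixes F C :: "'a set" and f :: "'a \<Rightarrow> real" and c :: "'a \<Rightarrow> 'a \<Rightarrow> real"
    and t :: nat and L :: "'a \<Rightarrow> nat" and \<delta> :: real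
    and OF OA :: "'a set" and O\<sigma> :: "'a \<Rightarrow> 'a" and N :: "'a \<Rightarrow> 'a set"
  assumes "finite F" and "finite C"
    and "\<forall>i\<in>F. f i \<ge> 0"
    and "is_metric_on (F \<union> C) c"
    and "lbflo_optimal F C f c t L OF OA O\<sigma>"
    and "\<delta> \<ge> 0"
    and "\<forall>i\<in>F. nearest_clients c C i (L i) (N i)"
  shows "flo_opt F C (\<lambda>i. f i + \<delta> * (\<Sum>j\<in>N i. c i j)) c t
           \<le> (1 + \<delta>) * sol_cost f c OF OA O\<sigma>"
proof -
  define f' where "f' = (\<lambda>i. f i + \<delta> * (\<Sum>j\<in>N i. c i j))"
  have met: "\<forall>x\<in>F \<union> C. \<forall>y\<in>F \<union> C. c x y \<ge> 0 \<and> c x y = c y x"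
    using assms(4) by (simp add: is_metric_on_def)
  have feas: "lbflo_feasible F C t L OF OA O\<sigma>" using assms(5) by (simp add: lbflo_optimal_def)
  hence OFF: "OF \<subseteq> F" and OAC: "OA \<subseteq> C" and sig: "\<forall>j\<in>OA. O\<sigma> j \<in> OF"
    and fl: "flo_feasible F C t OF OA O\<sigma>"
    and lb: "\<forall>i\<in>OF. card {j\<in>OA. O\<sigma> j = i} \<ge> L i"
    by (auto simp: lbflo_feasible_def flo_feasible_def)
  have fOF: "finite OF" using OFF assms(1) finite_subset by auto
  have fOA: "finite OA" using OAC assms(2) finite_subset by auto
  have Nsum0: "\<forall>i\<in>F. (\<Sum>j\<in>N i. c i j) \<ge> 0"
    using assms(7) met by (fastforce simp: nearest_clients_def intro!: sum_nonneg)
  have f'0: "\<forall>i\<in>F. f' i \<ge> 0" using assms(3,6) Nsum0 by (simp add: f'_def)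
  have bdd: "bdd_below {sol_cost f' c F' A \<sigma> | F' A \<sigma>. flo_feasible F C t F' A \<sigma>}"
  proof (rule bdd_belowI[where m=0], clarify)
    fix F' A \<sigma> assume "flo_feasible F C t F' A \<sigma>"
    hence "F' \<subseteq> F" "A \<subseteq> C" "\<forall>j\<in>A. \<sigma> j \<in> F'" by (auto simp: flo_feasible_def)
    thus "0 \<le> sol_cost f' c F' A \<sigma>" using f'0 met unfolding sol_cost_def
      by (intro add_nonneg_nonneg sum_nonneg) blast+
  qed
  have opt_le: "flo_opt F C f' c t \<le> sol_cost f' c OF OA O\<sigma>"
    unfolding flo_opt_def using fl by (intro cInf_lower[OF _ bdd]) auto
  define conn where "conn = (\<Sum>j\<in>OA. c j (O\<sigma> j))"
  have conn_grp: "conn = (\<Sum>i\<in>OF. \<Sum>j\<in>{j\<in>OA. O\<sigma> j = i}. c i j)"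
  proof -
    have "conn = (\<Sum>i\<in>OF. \<Sum>j\<in>{j\<in>OA. O\<sigma> j = i}. c j (O\<sigma> j))"
      unfolding conn_def using fOA fOF sig by (intro sum.group[symmetric]) auto
    also have "\<dots> = (\<Sum>i\<in>OF. \<Sum>j\<in>{j\<in>OA. O\<sigma> j = i}. c i j)"
      using met OFF OAC by (intro sum.cong refl) auto
    finally show ?thesis .
  qed
  have Nle: "(\<Sum>i\<in>OF. \<Sum>j\<in>N i. c i j) \<le> conn"
    unfolding conn_grp
  proof (rule sum_mono)
    fix i assume i: "i \<in> OF"
    hence iF: "i \<in> F" using OFF by auto
    show "(\<Sum>j\<in>N i. c i j) \<le> (\<Sum>j\<in>{j\<in>OA. O\<sigma> j = i}. c i j)"
      using assms(7) iF lb i OAC met assms(2)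
      by (intro nearest_le[where C=C]) (auto simp: nearest_clients_def)
  qed
  have conn0: "conn \<ge> 0" unfolding conn_def using met OAC OFF sig
    by (intro sum_nonneg) blast
  have fsum0: "(\<Sum>i\<in>OF. f i) \<ge> 0" using assms(3) OFF by (intro sum_nonneg) auto
  have "sol_cost f' c OF OA O\<sigma> = (\<Sum>i\<in>OF. f i) + \<delta> * (\<Sum>i\<in>OF. \<Sum>j\<in>N i. c i j) + conn"
    by (simp add: sol_cost_def f'_def conn_def sum.distrib sum_distrib_left)
  also have "\<dots> \<le> (\<Sum>i\<in>OF. f i) + \<delta> * conn + conn"
    using Nle assms(6) by (simp add: mult_left_mono)
  also have "\<dots> \<le> (1 + \<delta>) * sol_cost f c OF OA O\<sigma>"
    using fsum0 assms(6) by (simp add: sol_cost_def conn_def[symmetric] algebra_simps)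
  finally show ?thesis using opt_le by (simp add: f'_def)
qed

end
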